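(* Let $K\ge 1$ and let $\lambda_1,\dots,\lambda_K>0$. Let $\eta_1,\dots,\eta_K$ be independent random variables with $\eta_i\sim\mathrm{Ga}(\lambda_i,1)$, i.e. with density $\eta^{\lambda_i-1}e^{-\eta}/\Gamma(\lambda_i)$ on $(0,\infty)$. Then: (i) if $\Psi=\prod_{i=1}^K \eta_i$, the sparsity shape parameter of $\Psi$ equals $\min\{\lambda_1,\dots,\lambda_K\}$; (ii) if $\Psi=\sum_{i=1}^K \eta_i$, the sparsity shape parameter of $\Psi$ equals $\sum_{i=1}^K \lambda_i$.
   Context: For a positive random variable $\Psi$ with density $p$ on $(0,\infty)$, its sparsity shape parameter is defined as $$\sup\left\{ z \;\middle|\; \frac{p(\Psi)}{\Psi^{z-1}}\to \kappa \text{ as } \Psi\to 0 \text{ for some finite } \kappa\right\}.$$ *)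

theory Defs
  imports "HOL-Probability.Probability"
begin

definition gamma_density :: "real \<Rightarrow> real \<Rightarrow> real" where
  "gamma_density l x = (if 0 < x then x powr (l - 1) * exp (- x) / Gamma l else 0)"

definition sparsity_shape :: "(real \<Rightarrow> real) \<Rightarrow> real" where
  "sparsity_shape p =
     Sup {z. \<exists>\<kappa>::real. ((\<lambda>x. p x / x powr (z - 1)) \<longlongrightarrow> \<kappa>) (at_right 0)}"

end

theory Submission
  imports Defs
begin


lemma gd_nonneg: "0 < l \<Longrightarrow> 0 \<le> gamma_density l x"
  using Gamma_real_pos[of l] by (auto simp: gamma_density_def)

lemma gd_meas[measurable]: "gamma_density l \<in> borel_measurable borel"
  unfolding gamma_density_def by measurable

lemma gd_cont: "continuous_on {0<..} (gamma_density l)"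
proof -
  have c: "continuous_on {0<..} (\<lambda>x::real. x powr (l - 1) * exp (- x) * (1 / Gamma l))"
    by (intro continuous_intros) auto
  show ?thesis by (rule continuous_on_cong[THEN iffD1, OF refl _ c]) (auto simp: gamma_density_def)
qed

lemma gd_moment:
  assumes l: "0 < l" and s: "s < l"
  shows "(\<integral>\<^sup>+y. ennreal (gamma_density l y) * ennreal (\<bar>y\<bar> powr (-s)) \<partial>lborel)
     = ennreal (Gamma (l - s) / Gamma l)"
proof -
  have G: "Gamma l > 0" using l by (rule Gamma_real_pos)
  have "(\<integral>\<^sup>+y. ennreal (gamma_density l y) * ennreal (\<bar>y\<bar> powr (-s)) \<partial>lborel)
     = (\<integral>\<^sup>+y. ennreal (indicator {0..} y * y powr (l - s - 1) / exp y) * ennreal (1 / Gamma l) \<partial>lborel)"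
  proof (intro nn_integral_cong)
    fix y :: real
    show "ennreal (gamma_density l y) * ennreal (\<bar>y\<bar> powr (-s)) =
       ennreal (indicator {0..} y * y powr (l - s - 1) / exp y) * ennreal (1 / Gamma l)"
    proof (cases "y > 0")
      case True
      have e: "l - s - 1 = (l - 1) + (- s)" by simp
      have "y powr (l - 1) * y powr (-s) = y powr (l - s - 1)"
        unfolding e by (simp only: powr_add)
      then show ?thesis using True G
        by (simp add: gamma_density_def ennreal_mult'' [symmetric] exp_minus field_simps)
    next
      case False
      then show ?thesis by (cases "y = 0") (auto simp: gamma_density_def indicator_def)
    qed
  qed
  also have "\<dots> = ennreal (Gamma (l - s)) * ennreal (1 / Gamma l)"
    using s by (simp add: nn_integral_multc Gamma_conv_nn_integral_real)
  also have "\<dots> = ennreal (Gamma (l - s) / Gamma l)"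
    using G s by (simp add: ennreal_mult'' [symmetric] Gamma_real_pos less_imp_le)
  finally show ?thesis .
qed

lemma gd_total: assumes "0 < l" shows "(\<integral>\<^sup>+y. ennreal (gamma_density l y) \<partial>lborel) = 1"
proof -
  have "(\<integral>\<^sup>+y. ennreal (gamma_density l y) \<partial>lborel) =
     (\<integral>\<^sup>+y. ennreal (gamma_density l y) * ennreal (\<bar>y\<bar> powr (-0)) \<partial>lborel)"
    by (intro nn_integral_cong) (auto simp: gamma_density_def)
  also have "\<dots> = 1" using gd_moment[OF assms, of 0] assms Gamma_real_pos[OF assms] by simp
  finally show ?thesis .
qed

lemma gd_prob: assumes "0 < l" shows "prob_space (density lborel (\<lambda>x. ennreal (gamma_density l x)))"
  by (rule prob_spaceI) (simp add: emeasure_density gd_total[OF assms])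

lemma powr_le_exp: fixes c y :: real assumes c: "0 < c" and y: "0 \<le> y" shows "y powr c \<le> c powr c * exp y"
proof -
  have "y / c \<le> exp (y / c)" using y c
    by (smt (verit) divide_nonneg_pos exp_ge_add_one_self)
  then have "(y / c) powr c \<le> exp (y / c) powr c"
    using c y by (intro powr_mono2) auto
  also have "exp (y / c) powr c = exp y" using c by (simp add: powr_def)
  finally show ?thesis using c y by (simp add: powr_divide field_simps)
qed

lemma gd_upper:
  assumes l: "0 < l" and s: "s < l" and y: "0 < y"
  shows "gamma_density l y \<le> ((l - s) powr (l - s) / Gamma l) * y powr (s - 1)"
proof -
  have G: "Gamma l > 0" using l by (rule Gamma_real_pos)
  have "gamma_density l y = (y powr (l - s) * exp (- y)) * y powr (s - 1) / Gamma l"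
    using y by (simp add: gamma_density_def powr_add[symmetric])
  also have "\<dots> \<le> ((l - s) powr (l - s) * exp y * exp (- y)) * y powr (s - 1) / Gamma l"
    using powr_le_exp[of "l - s" y] s y G
    by (intro divide_right_mono mult_right_mono) auto
  also have "\<dots> = ((l - s) powr (l - s) / Gamma l) * y powr (s - 1)"
    by (simp add: exp_minus field_simps)
  finally show ?thesis .
qed

lemma gd_lower:
  assumes l: "0 < l" and x: "0 < x" "x \<le> 1"
  shows "ennreal (exp (-1) / Gamma l * (x powr l / l)) \<le>
     (\<integral>\<^sup>+t. ennreal (gamma_density l t) * indicator {0<..x} t \<partial>lborel)"
proof -
  have G: "Gamma l > 0" using l by (rule Gamma_real_pos)
  have hi: "((\<lambda>t. exp (-1) / Gamma l * t powr (l - 1)) has_integral (exp (-1) / Gamma l * (x powr l / l))) {0..x}"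
    using has_integral_powr_from_0[of "l - 1" x] l x by (intro has_integral_mult_right) auto
  have "ennreal (exp (-1) / Gamma l * (x powr l / l)) =
     (\<integral>\<^sup>+t. ennreal (exp (-1) / Gamma l * t powr (l - 1)) * indicator {0..x} t \<partial>lborel)"
    using nn_integral_has_integral_lebesgue'[OF _ hi] G by simp
  also have "\<dots> \<le> (\<integral>\<^sup>+t. ennreal (gamma_density l t) * indicator {0<..x} t \<partial>lborel)"
  proof (intro nn_integral_mono)
    fix t :: real
    show "ennreal (exp (-1) / Gamma l * t powr (l - 1)) * indicator {0..x} t \<le>
          ennreal (gamma_density l t) * indicator {0<..x} t"
    proof (cases "0 < t \<and> t \<le> x")
      case True
      have "exp (-1) \<le> exp (- t)" using True x by simp
      then have "exp (-1) / Gamma l * t powr (l - 1) \<le> gamma_density l t"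
        using True G by (auto simp: gamma_density_def field_simps intro!: mult_left_mono)
      then show ?thesis using True by (auto simp: indicator_def intro: ennreal_leI)
    next
      case False
      then show ?thesis by (cases "t = 0") (auto simp: indicator_def)
    qed
  qed
  finally show ?thesis .
qed



lemma sparsity_char:
  fixes p :: "real \<Rightarrow> real" and m :: real
  assumes m: "0 < m"
    and nonneg: "\<And>x. 0 < x \<Longrightarrow> 0 \<le> p x"
    and up: "\<And>s. s < m \<Longrightarrow> \<exists>D. \<forall>x>0. p x \<le> D * x powr (s - 1)"
    and low: "\<exists>c>0. \<exists>\<delta>>0. \<forall>x. 0 < x \<longrightarrow> x < \<delta> \<longrightarrow>
       ennreal (c * x powr m) \<le> (\<integral>\<^sup>+t. ennreal (p t) * indicator {0<..x} t \<partial>lborel)"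
  shows "sparsity_shape p = m"
proof -
  define S where "S = {z. \<exists>\<kappa>::real. ((\<lambda>x. p x / x powr (z - 1)) \<longlongrightarrow> \<kappa>) (at_right 0)}"
  have inS: "z \<in> S" if z: "z < m" for z
  proof -
    define s where "s = (z + m) / 2"
    have sm: "s < m" and zs: "z < s" using z by (auto simp: s_def)
    obtain D where D: "\<forall>x>0. p x \<le> D * x powr (s - 1)" using up[OF sm] by blast
    have "((\<lambda>x::real. x powr (s - z)) \<longlongrightarrow> 0) (at_right 0)"
      by (rule tendsto_zero_powrI) (use zs in \<open>auto intro: tendsto_ident_at eventually_mono[OF eventually_at_right_less]\<close>)
    then have lim: "((\<lambda>x. D * x powr (s - z)) \<longlongrightarrow> 0) (at_right 0)"
      using tendsto_mult[OF tendsto_const[of D]] by fastforce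
    have ev1: "\<forall>\<^sub>F x in at_right 0. 0 \<le> p x / x powr (z - 1)"
      by (rule eventually_mono[OF eventually_at_right_less]) (auto intro!: divide_nonneg_pos nonneg)
    have ev2: "\<forall>\<^sub>F x in at_right 0. p x / x powr (z - 1) \<le> D * x powr (s - z)"
    proof (rule eventually_mono[OF eventually_at_right_less])
      fix x :: real assume x: "0 < x"
      have "p x / x powr (z - 1) \<le> D * x powr (s - 1) / x powr (z - 1)"
        using D x by (intro divide_right_mono) auto
      also have "\<dots> = D * x powr (s - z)"
      proof -
        have "x powr (s - 1) / x powr (z - 1) = x powr (s - z)" using powr_diff[of x "s-1" "z-1"] by simp
        then show ?thesis by (metis times_divide_eq_right)
      qed
      finally show "p x / x powr (z - 1) \<le> D * x powr (s - z)" .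
    qed
    have "((\<lambda>x. p x / x powr (z - 1)) \<longlongrightarrow> 0) (at_right 0)"
      by (rule tendsto_sandwich[OF ev1 ev2 tendsto_const lim])
    then show ?thesis unfolding S_def by blast
  qed
  have le: "z \<le> m" if zS: "z \<in> S" for z
  proof (rule ccontr)
    assume "\<not> z \<le> m"
    then have zm: "m < z" by simp
    from zS obtain \<kappa> where k: "((\<lambda>x. p x / x powr (z - 1)) \<longlongrightarrow> \<kappa>) (at_right 0)"
      unfolding S_def by blast
    have "\<forall>\<^sub>F x in at_right 0. p x / x powr (z - 1) < \<kappa> + 1"
      using k by (rule order_tendstoD) simp
    then obtain d where d: "d > 0" "\<And>x. 0 < x \<Longrightarrow> x < d \<Longrightarrow> p x / x powr (z - 1) < \<kappa> + 1"
      unfolding eventually_at_right[OF zero_less_one] by auto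
    define B where "B = \<kappa> + 1"
    have pB: "p x \<le> B * x powr (z - 1)" if "0 < x" "x < d" for x
    proof -
      have "p x / x powr (z - 1) < B" using d(2)[OF that] by (simp add: B_def)
      then show ?thesis using that by (simp add: divide_less_eq)
    qed
    have B: "B > 0"
    proof -
      have "p (d/2) / (d/2) powr (z - 1) < B" using d by (simp add: B_def)
      moreover have "0 \<le> p (d/2) / (d/2) powr (z - 1)" using d nonneg by simp
      ultimately show ?thesis by simp
    qed
    obtain c \<delta> where c: "c > 0" "\<delta> > 0" and cl: "\<And>x. 0 < x \<Longrightarrow> x < \<delta> \<Longrightarrow>
       ennreal (c * x powr m) \<le> (\<integral>\<^sup>+t. ennreal (p t) * indicator {0<..x} t \<partial>lborel)"
      using low by blast
    have key: "c * z / B \<le> x powr (z - m)" if x: "0 < x" "x < d" "x < \<delta>" for x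
    proof -
      have hi: "((\<lambda>t. B * t powr (z - 1)) has_integral (B * (x powr z / z))) {0..x}"
        using has_integral_powr_from_0[of "z - 1" x] zm m x by (intro has_integral_mult_right) auto
      have "ennreal (c * x powr m) \<le> (\<integral>\<^sup>+t. ennreal (p t) * indicator {0<..x} t \<partial>lborel)"
        using cl x by auto
      also have "\<dots> \<le> (\<integral>\<^sup>+t. ennreal (B * t powr (z - 1)) * indicator {0..x} t \<partial>lborel)"
      proof (intro nn_integral_mono)
        fix t :: real
        show "ennreal (p t) * indicator {0<..x} t \<le> ennreal (B * t powr (z - 1)) * indicator {0..x} t"
          using pB[of t] x by (auto simp: indicator_def intro: ennreal_leI)
      qed
      also have "\<dots> = ennreal (B * (x powr z / z))"
        using nn_integral_has_integral_lebesgue'[OF _ hi] B by simp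
      finally have "c * x powr m \<le> B * (x powr z / z)"
        using B zm m x by (subst (asm) ennreal_le_iff) auto
      then have "c * z \<le> B * (x powr z / x powr m)"
        using x zm m by (simp add: field_simps)
      then have "c * z \<le> B * x powr (z - m)" using x by (simp add: powr_diff)
      then show ?thesis using B by (simp add: field_simps)
    qed
    have "((\<lambda>x::real. x powr (z - m)) \<longlongrightarrow> 0) (at_right 0)"
      by (rule tendsto_zero_powrI) (use zm in \<open>auto intro: tendsto_ident_at eventually_mono[OF eventually_at_right_less]\<close>)
    then have e1: "\<forall>\<^sub>F x in at_right 0. x powr (z - m) < c * z / B"
      by (rule order_tendstoD) (use c B zm m in simp)
    have e2: "\<forall>\<^sub>F x in at_right 0. 0 < x \<and> x < d \<and> x < \<delta>"
      unfolding eventually_at_right[OF zero_less_one] using d c by (intro exI[of _ "min d \<delta>"]) auto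
    have "\<forall>\<^sub>F x in at_right (0::real). False"
      using e1 e2 by eventually_elim (use key in force)
    then show False by (simp add: eventually_False)
  qed
  have "Sup S = m"
  proof (rule cSup_eq_non_empty)
    show "S \<noteq> {}" using inS[of "m - 1"] by auto
    show "\<And>x. x \<in> S \<Longrightarrow> x \<le> m" by (rule le)
    fix y assume y: "\<And>x. x \<in> S \<Longrightarrow> x \<le> y"
    show "m \<le> y"
    proof (rule ccontr)
      assume "\<not> m \<le> y"
      then have "(y + m) / 2 \<in> S" by (intro inS) simp
      from y[OF this] \<open>\<not> m \<le> y\<close> show False by simp
    qed
  qed
  then show ?thesis unfolding sparsity_shape_def S_def .
qed

lemma le_from_integrals:
  fixes p g :: "real \<Rightarrow> real"
  assumes cp: "continuous_on {0<..} p" and cg: "continuous_on {0<..} g"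
    and np: "\<And>x. 0 < x \<Longrightarrow> 0 \<le> p x" and ng: "\<And>x. 0 < x \<Longrightarrow> 0 \<le> g x"
    and I: "\<And>a b. 0 < a \<Longrightarrow> a < b \<Longrightarrow>
      (\<integral>\<^sup>+t. ennreal (p t) * indicator {a..b} t \<partial>lborel) \<le> (\<integral>\<^sup>+t. ennreal (g t) * indicator {a..b} t \<partial>lborel)"
    and x: "0 < x"
  shows "p x \<le> g x"
proof (rule ccontr)
  assume "\<not> p x \<le> g x"
  define e where "e = (p x - g x) / 2"
  have e: "e > 0" using \<open>\<not> p x \<le> g x\<close> by (simp add: e_def)
  have "continuous_on {0<..} (\<lambda>y. p y - g y)" using cp cg by (intro continuous_on_diff)
  then have "continuous (at x) (\<lambda>y. p y - g y)"
    using x by (subst (asm) continuous_on_eq_continuous_at) auto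
  then obtain d where d: "d > 0" and dd: "\<And>y. dist y x < d \<Longrightarrow> dist (p y - g y) (p x - g x) < e"
    unfolding continuous_at_eps_delta using e by blast
  define b where "b = x + d / 2"
  have xb: "x < b" using d by (simp add: b_def)
  have sub: "{x..b} \<subseteq> {0<..}" using x by auto
  have pos: "e \<le> p y - g y" if "y \<in> {x..b}" for y
  proof -
    have "dist y x < d" using that d by (auto simp: b_def dist_real_def)
    from dd[OF this] have "\<bar>(p y - g y) - (p x - g x)\<bar> < e" by (simp add: dist_real_def)
    then have "- ((p y - g y) - (p x - g x)) < e"
      using abs_ge_minus_self[of "(p y - g y) - (p x - g x)"] by linarith
    then show ?thesis unfolding e_def by argo
  qed
  have ip: "p integrable_on {x..b}"
    by (rule integrable_continuous_interval) (rule continuous_on_subset[OF cp sub])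
  have ig: "g integrable_on {x..b}"
    by (rule integrable_continuous_interval) (rule continuous_on_subset[OF cg sub])
  have hp: "(\<integral>\<^sup>+t. ennreal (p t) * indicator {x..b} t \<partial>lborel) = ennreal (integral {x..b} p)"
    by (rule nn_integral_has_integral_lebesgue'[OF _ integrable_integral[OF ip]]) (use np x in auto)
  have hg: "(\<integral>\<^sup>+t. ennreal (g t) * indicator {x..b} t \<partial>lborel) = ennreal (integral {x..b} g)"
    by (rule nn_integral_has_integral_lebesgue'[OF _ integrable_integral[OF ig]]) (use ng x in auto)
  have ig0: "0 \<le> integral {x..b} g"
    by (rule integral_nonneg[OF ig]) (use ng x in auto)
  have "ennreal (integral {x..b} p) \<le> ennreal (integral {x..b} g)"
    using I[OF x xb] hp hg by simp
  then have le: "integral {x..b} p \<le> integral {x..b} g"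
    using ig0 by (subst (asm) ennreal_le_iff) auto
  have "integral {x..b} (\<lambda>y. e) \<le> integral {x..b} (\<lambda>y. p y - g y)"
    by (rule integral_le) (use pos ip ig in \<open>auto intro: integrable_diff\<close>)
  also have "\<dots> = integral {x..b} p - integral {x..b} g"
    by (rule integral_diff[OF ip ig])
  finally have "(b - x) * e \<le> integral {x..b} p - integral {x..b} g" using xb by (simp add: content_real)
  moreover have "0 < (b - x) * e" using xb e by simp
  ultimately show False using le by linarith
qed

lemma gd_conv:
  assumes a: "0 < a" and b: "0 < b"
  shows "(\<lambda>x. \<integral>\<^sup>+y. ennreal (gamma_density a (x - y)) * ennreal (gamma_density b y) \<partial>lborel)
       = (\<lambda>x. ennreal (gamma_density (a + b) x))"
proof
  fix x :: real
  have Ga: "Gamma a > 0" using a by (rule Gamma_real_pos)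
  have Gb: "Gamma b > 0" using b by (rule Gamma_real_pos)
  have Gab: "Gamma (a + b) > 0" using a b by (intro Gamma_real_pos) simp
  show "(\<integral>\<^sup>+y. ennreal (gamma_density a (x - y)) * ennreal (gamma_density b y) \<partial>lborel)
       = ennreal (gamma_density (a + b) x)"
  proof (cases "0 < x")
    case False
    have z: "(\<lambda>y. ennreal (gamma_density a (x - y)) * ennreal (gamma_density b y)) = (\<lambda>y. 0)"
      using False by (intro ext) (auto simp: gamma_density_def)
    show ?thesis using False unfolding z by (simp add: gamma_density_def)
  next
    case True
    define C where "C = x powr (a + b - 2) * exp (- x) / (Gamma a * Gamma b)"
    have C0: "C \<ge> 0" using Ga Gb by (simp add: C_def)
    have pt: "ennreal (gamma_density a (x - x * u)) * ennreal (gamma_density b (x * u))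
       = ennreal C * (ennreal (u powr (b - 1) * (1 - u) powr (a - 1)) * indicator {0..1} u)" for u
    proof (cases "0 < u \<and> u < 1")
      case True
      have e1: "x - x * u = x * (1 - u)" by (simp add: algebra_simps)
      have "gamma_density a (x - x * u) * gamma_density b (x * u)
          = (x powr (a - 1) * x powr (b - 1)) * exp (- (x - x * u) + - (x * u)) / (Gamma a * Gamma b)
            * (u powr (b - 1) * (1 - u) powr (a - 1))"
      proof -
        have g1: "gamma_density a (x - x*u) = x powr (a-1) * (1-u) powr (a-1) * exp (-(x - x*u)) / Gamma a"
          using True \<open>0<x\<close> unfolding e1 by (simp add: gamma_density_def powr_mult)
        have g2: "gamma_density b (x*u) = x powr (b-1) * u powr (b-1) * exp (-(x*u)) / Gamma b"
          using True \<open>0<x\<close> by (simp add: gamma_density_def powr_mult)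
        show ?thesis unfolding g1 g2 using Ga Gb by (simp add: field_simps mult_exp_exp)
      qed
      also have "x powr (a - 1) * x powr (b - 1) = x powr (a + b - 2)"
        using \<open>0 < x\<close> by (simp add: powr_add[symmetric])
      also have "- (x - x * u) + - (x * u) = - x" by simp
      finally have "gamma_density a (x - x * u) * gamma_density b (x * u)
          = C * (u powr (b - 1) * (1 - u) powr (a - 1))" by (simp add: C_def)
      moreover have "0 \<le> gamma_density a (x - x * u)" "0 \<le> gamma_density b (x * u)"
        using a b by (auto intro: gd_nonneg)
      ultimately show ?thesis using True C0
        by (simp add: ennreal_mult'' [symmetric] indicator_def)
    next
      case False
      then have "u \<le> 0 \<or> 1 \<le> u" by auto
      then show ?thesis
      proof
        assume "u \<le> 0"
        moreover have "x * u \<le> 0" using \<open>u \<le> 0\<close> \<open>0 < x\<close> by (simp add: mult_nonneg_nonpos)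
        ultimately show ?thesis using \<open>0 < x\<close> by (cases "u = 0") (auto simp: gamma_density_def indicator_def)
      next
        assume u: "1 \<le> u"
        have "x - x * u \<le> 0" using u \<open>0 < x\<close> by (simp add: mult_le_cancel_left1)
        then show ?thesis using u \<open>0 < x\<close> by (cases "u = 1") (auto simp: gamma_density_def indicator_def)
      qed
    qed
    have "(\<integral>\<^sup>+y. ennreal (gamma_density a (x - y)) * ennreal (gamma_density b y) \<partial>lborel)
      = ennreal \<bar>x\<bar> * (\<integral>\<^sup>+u. ennreal (gamma_density a (x - (0 + x * u))) * ennreal (gamma_density b (0 + x * u)) \<partial>lborel)"
      by (rule nn_integral_real_affine) (use True in auto)
    also have "\<dots> = ennreal x * (ennreal C * (\<integral>\<^sup>+u. ennreal (u powr (b - 1) * (1 - u) powr (a - 1)) * indicator {0..1} u \<partial>lborel))"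
      using True by (simp add: pt nn_integral_cmult)
    also have "(\<integral>\<^sup>+u. ennreal (u powr (b - 1) * (1 - u) powr (a - 1)) * indicator {0..1} u \<partial>lborel) = ennreal (Beta b a)"
      by (rule nn_integral_has_integral_lebesgue'[OF _ has_integral_Beta_real[OF b a]]) auto
    also have "ennreal x * (ennreal C * ennreal (Beta b a)) = ennreal (x * C * Beta b a)"
    proof -
      have B0: "0 \<le> Beta b a" using Ga Gb Gab by (simp add: Beta_def add.commute)
      have "ennreal (x * C * Beta b a) = ennreal x * ennreal C * ennreal (Beta b a)"
        using True C0 B0 by (simp add: ennreal_mult)
      then show ?thesis by (simp add: mult.assoc)
    qed
    also have "x * C * Beta b a = gamma_density (a + b) x"
    proof -
      have "x * x powr (a + b - 2) = x powr (a + b - 1)"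
        using True by (simp add: powr_add[symmetric] powr_mult_base)
      then show ?thesis using True Ga Gb Gab
        by (simp add: gamma_density_def C_def Beta_def field_simps)
    qed
    finally show ?thesis .
  qed
qed

lemma (in prob_space) gamma_sum:
  assumes "finite I" "I \<noteq> {}" "indep_vars (\<lambda>_. borel) X I"
    "\<And>i. i \<in> I \<Longrightarrow> 0 < l i"
    "\<And>i. i \<in> I \<Longrightarrow> distributed M lborel (X i) (\<lambda>x. ennreal (gamma_density (l i) x))"
  shows "distributed M lborel (\<lambda>\<omega>. \<Sum>i\<in>I. X i \<omega>) (\<lambda>x. ennreal (gamma_density (\<Sum>i\<in>I. l i) x))"
  using assms
proof (induct I rule: finite_ne_induct)
  case (singleton i) then show ?case by auto
next
  case (insert i I)
  have pos: "0 < sum l I" using insert by (intro sum_pos) auto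
  have "distributed M lborel (\<lambda>\<omega>. X i \<omega> + (\<Sum>j\<in>I. X j \<omega>))
     (\<lambda>x. \<integral>\<^sup>+y. ennreal (gamma_density (l i) (x - y)) * ennreal (gamma_density (sum l I) y) \<partial>lborel)"
  proof (rule distributed_convolution)
    show "indep_var borel (X i) borel (\<lambda>\<omega>. \<Sum>j\<in>I. X j \<omega>)"
      using insert by (intro indep_vars_sum) auto
    show "distributed M lborel (X i) (\<lambda>x. ennreal (gamma_density (l i) x))" using insert by auto
    show "distributed M lborel (\<lambda>\<omega>. \<Sum>j\<in>I. X j \<omega>) (\<lambda>x. ennreal (gamma_density (sum l I) x))"
      using insert by (intro insert.hyps(4)) (auto intro: indep_vars_subset)
  qed
  then show ?case
    using insert gd_conv[of "l i" "sum l I"] pos by simp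
qed



lemma IL:
  assumes l: "0 < l" and s: "s < l" and A: "A \<subseteq> {0<..}" and Am[measurable]: "A \<in> sets borel"
  shows "(\<integral>\<^sup>+t. ennreal (gamma_density l t) * indicator A (t * r) \<partial>lborel)
     \<le> ennreal ((l - s) powr (l - s) / Gamma l) * ennreal (\<bar>r\<bar> powr (- s))
        * (\<integral>\<^sup>+u. ennreal (u powr (s - 1)) * indicator A u \<partial>lborel)"
proof (cases "0 < r")
  case False
  have z: "(\<lambda>t. ennreal (gamma_density l t) * indicator A (t * r)) = (\<lambda>t. 0)"
  proof
    fix t :: real
    show "ennreal (gamma_density l t) * indicator A (t * r) = 0"
    proof (cases "0 < t")
      case True
      then have "t * r \<le> 0" using False by (simp add: mult_nonneg_nonpos)
      then have "t * r \<notin> A" using A by auto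
      then show ?thesis by simp
    qed (simp add: gamma_density_def)
  qed
  show ?thesis unfolding z by simp
next
  case True
  define Cl where "Cl = (l - s) powr (l - s) / Gamma l"
  have Cl0: "0 \<le> Cl" using Gamma_real_pos[OF l] by (simp add: Cl_def)
  have "(\<integral>\<^sup>+t. ennreal (gamma_density l t) * indicator A (t * r) \<partial>lborel)
     = ennreal \<bar>1/r\<bar> * (\<integral>\<^sup>+u. ennreal (gamma_density l (0 + (1/r) * u)) * indicator A ((0 + (1/r) * u) * r) \<partial>lborel)"
    by (rule nn_integral_real_affine) (use True in auto)
  also have "\<dots> = (\<integral>\<^sup>+u. ennreal (1/r) * (ennreal (gamma_density l (u / r)) * indicator A u) \<partial>lborel)"
    using True by (simp add: nn_integral_cmult)
  also have "\<dots> \<le> (\<integral>\<^sup>+u. ennreal (Cl * r powr (- s)) * (ennreal (u powr (s - 1)) * indicator A u) \<partial>lborel)"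
  proof (intro nn_integral_mono)
    fix u :: real
    show "ennreal (1/r) * (ennreal (gamma_density l (u / r)) * indicator A u)
        \<le> ennreal (Cl * r powr (- s)) * (ennreal (u powr (s - 1)) * indicator A u)"
    proof (cases "u \<in> A")
      case uA: True
      then have u: "0 < u" using A by auto
      have "1 / r * gamma_density l (u / r) \<le> 1 / r * (Cl * (u / r) powr (s - 1))"
        using gd_upper[OF l s, of "u / r"] u True by (intro mult_left_mono) (auto simp: Cl_def)
      also have "\<dots> = Cl * r powr (- s) * u powr (s - 1)"
      proof -
        have "r * r powr (s - 1) = r powr s" using True by (simp add: powr_mult_base)
        then show ?thesis using True u
          by (simp add: powr_divide powr_minus field_simps)
      qed
      finally have le: "1 / r * gamma_density l (u / r) \<le> Cl * r powr (- s) * u powr (s - 1)" .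
      have "ennreal (1/r) * ennreal (gamma_density l (u / r)) = ennreal (1 / r * gamma_density l (u / r))"
        by (subst ennreal_mult[symmetric]) (use True gd_nonneg[OF l] in auto)
      moreover have "ennreal (Cl * r powr (- s)) * ennreal (u powr (s - 1)) = ennreal (Cl * r powr (- s) * u powr (s - 1))"
        using Cl0 by (simp add: ennreal_mult)
      ultimately show ?thesis using uA le by (simp add: ennreal_leI mult.assoc[symmetric])
    qed simp
  qed
  also have "\<dots> = ennreal (Cl * r powr (- s)) * (\<integral>\<^sup>+u. ennreal (u powr (s - 1)) * indicator A u \<partial>lborel)"
    by (simp add: nn_integral_cmult)
  also have "ennreal (Cl * r powr (- s)) = ennreal Cl * ennreal (\<bar>r\<bar> powr (- s))"
    using Cl0 True by (simp add: ennreal_mult)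
  finally show ?thesis by (simp add: Cl_def)
qed

lemma prod_ind_le:
  fixes y :: "nat \<Rightarrow> real"
  assumes fin: "finite I'" and j: "j \<notin> I'" and x: "0 < x"
  shows "(\<Prod>i\<in>insert j I'. indicator (if i = j then {0<..x} else {0<..1}) (y i) :: ennreal)
    \<le> indicator {0<..x} (\<Prod>i\<in>insert j I'. y i)"
proof (cases "\<forall>i\<in>insert j I'. y i \<in> (if i = j then {0<..x} else {0<..1::real})")
  case True
  then have yj: "0 < y j" "y j \<le> x" by auto
  have yi: "0 < y i \<and> y i \<le> 1" if "i \<in> I'" for i
  proof -
    have "i \<noteq> j" using that j by auto
    moreover have "y i \<in> (if i = j then {0<..x} else {0<..1})" using True that by auto
    ultimately show ?thesis by simp
  qed
  have P1: "(\<Prod>i\<in>I'. y i) \<le> 1" using yi by (intro prod_le_1) (auto simp: less_imp_le)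
  have P0: "0 < (\<Prod>i\<in>I'. y i)" using yi by (intro prod_pos) auto
  have "y j * (\<Prod>i\<in>I'. y i) \<le> x"
    using mult_left_mono[OF P1, of "y j"] yj(1,2) by (metis mult.right_neutral order_trans less_imp_le)
  then have "(\<Prod>i\<in>insert j I'. y i) \<in> {0<..x}" using fin j yj P0 by auto
  moreover have "(\<Prod>i\<in>insert j I'. indicator (if i = j then {0<..x} else {0<..1}) (y i) :: ennreal) = 1"
    using True by (intro prod.neutral) auto
  ultimately show ?thesis by simp
next
  case False
  then obtain i where "i \<in> insert j I'" "y i \<notin> (if i = j then {0<..x} else {0<..1::real})" by blast
  then have z: "(\<Prod>i\<in>insert j I'. indicator (if i = j then {0<..x} else {0<..1}) (y i) :: ennreal) = 0"
    using fin by (intro prod_zero) (auto intro!: bexI[of _ i])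
  show ?thesis unfolding z by simp
qed

theorem theorem1:
  fixes M :: "'a measure" and K :: nat and lam :: "nat \<Rightarrow> real"
    and \<eta> :: "nat \<Rightarrow> 'a \<Rightarrow> real" and p q :: "real \<Rightarrow> real"
  assumes "prob_space M"
    and "K \<ge> 1"
    and "\<And>i. i \<in> {1..K} \<Longrightarrow> lam i > 0"
    and "prob_space.indep_vars M (\<lambda>_. borel) \<eta> {1..K}"
    and "\<And>i. i \<in> {1..K} \<Longrightarrow>
           distributed M lborel (\<eta> i) (\<lambda>x. ennreal (gamma_density (lam i) x))"
    and "distributed M lborel (\<lambda>\<omega>. \<Prod>i\<in>{1..K}. \<eta> i \<omega>) (\<lambda>x. ennreal (p x))"
    and "continuous_on {0<..} p" and "\<forall>x>0. p x \<ge> 0"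
    and "distributed M lborel (\<lambda>\<omega>. \<Sum>i\<in>{1..K}. \<eta> i \<omega>) (\<lambda>x. ennreal (q x))"
    and "continuous_on {0<..} q" and "\<forall>x>0. q x \<ge> 0"
  shows "sparsity_shape p = Min (lam ` {1..K})
       \<and> sparsity_shape q = (\<Sum>i\<in>{1..K}. lam i)"
proof -
  interpret P: prob_space M by fact
  define I where "I = {1..K}"
  have fin: "finite I" and ne: "I \<noteq> {}" using assms(2) by (auto simp: I_def)
  have lpos: "\<And>i. i \<in> I \<Longrightarrow> 0 < lam i" using assms(3) by (auto simp: I_def)
  have ind: "P.indep_vars (\<lambda>_. borel) \<eta> I" using assms(4) by (simp add: I_def)
  have dist: "\<And>i. i \<in> I \<Longrightarrow> distributed M lborel (\<eta> i) (\<lambda>x. ennreal (gamma_density (lam i) x))"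
    using assms(5) by (simp add: I_def)
  have dp: "distributed M lborel (\<lambda>\<omega>. \<Prod>i\<in>I. \<eta> i \<omega>) (\<lambda>x. ennreal (p x))"
    using assms(6) by (simp add: I_def)
  have dq: "distributed M lborel (\<lambda>\<omega>. \<Sum>i\<in>I. \<eta> i \<omega>) (\<lambda>x. ennreal (q x))"
    using assms(9) by (simp add: I_def)
  have pnn: "\<And>x. 0 < x \<Longrightarrow> 0 \<le> p x" and qnn: "\<And>x. 0 < x \<Longrightarrow> 0 \<le> q x"
    using assms(8,11) by auto

  define L where "L = (\<Sum>i\<in>I. lam i)"
  have Lpos: "0 < L" unfolding L_def using fin ne lpos by (intro sum_pos) auto
  have dg: "distributed M lborel (\<lambda>\<omega>. \<Sum>i\<in>I. \<eta> i \<omega>) (\<lambda>x. ennreal (gamma_density L x))"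
    unfolding L_def by (rule P.gamma_sum[OF fin ne ind lpos dist])
  have Iab: "(\<integral>\<^sup>+t. ennreal (q t) * indicator {a..b} t \<partial>lborel)
       = (\<integral>\<^sup>+t. ennreal (gamma_density L t) * indicator {a..b} t \<partial>lborel)" for a b :: real
    using distributed_emeasure[OF dq, of "{a..b}"] distributed_emeasure[OF dg, of "{a..b}"] by simp
  have qeq: "q x = gamma_density L x" if x: "0 < x" for x
  proof (rule antisym)
    show "q x \<le> gamma_density L x"
      by (rule le_from_integrals[OF assms(10) gd_cont qnn _ _ x]) (use Lpos Iab in \<open>auto intro: gd_nonneg\<close>)
    show "gamma_density L x \<le> q x"
      by (rule le_from_integrals[OF gd_cont assms(10) _ qnn _ x]) (use Lpos Iab in \<open>auto intro: gd_nonneg\<close>)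
  qed
  have partii: "sparsity_shape q = L"
  proof (rule sparsity_char[OF Lpos qnn])
    fix s assume "s < L"
    then show "\<exists>D. \<forall>x>0. q x \<le> D * x powr (s - 1)"
      using gd_upper[OF Lpos] qeq by metis
  next
    show "\<exists>c>0. \<exists>\<delta>>0. \<forall>x. 0 < x \<longrightarrow> x < \<delta> \<longrightarrow>
       ennreal (c * x powr L) \<le> (\<integral>\<^sup>+t. ennreal (q t) * indicator {0<..x} t \<partial>lborel)"
    proof -
      have cp: "0 < exp (-1) / Gamma L / L" using Lpos Gamma_real_pos[OF Lpos] by simp
      have "ennreal (exp (- 1) / Gamma L / L * x powr L) \<le> (\<integral>\<^sup>+t. ennreal (q t) * indicator {0<..x} t \<partial>lborel)"
        if x: "0 < x" "x < 1" for x
      proof -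
      have "ennreal (exp (- 1) / Gamma L / L * x powr L) = ennreal (exp (-1) / Gamma L * (x powr L / L))"
        by simp
      also have "\<dots> \<le> (\<integral>\<^sup>+t. ennreal (gamma_density L t) * indicator {0<..x} t \<partial>lborel)"
        using x by (intro gd_lower Lpos) auto
      also have "\<dots> = (\<integral>\<^sup>+t. ennreal (q t) * indicator {0<..x} t \<partial>lborel)"
        by (intro nn_integral_cong) (auto simp: qeq indicator_def)
      finally show ?thesis .
      qed
      then show ?thesis using cp zero_less_one by blast
    qed
  qed

  define m where "m = Min (lam ` I)"
  have "Min (lam ` I) \<in> lam ` I" using fin ne by (intro Min_in) auto
  then obtain j where jI: "j \<in> I" and lj: "lam j = m"
    unfolding m_def by auto
  have mpos: "0 < m" using lpos jI lj by auto
  have mle: "\<And>i. i \<in> I \<Longrightarrow> m \<le> lam i" using fin unfolding m_def by auto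
  define I' where "I' = I - {j}"
  have II': "I = insert j I'" and jI': "j \<notin> I'" and finI': "finite I'"
    using jI fin by (auto simp: I'_def)
  define lam' where "lam' i = (if i \<in> I then lam i else 1)" for i
  have l'pos: "0 < lam' i" for i using lpos by (simp add: lam'_def)
  define N where "N i = density lborel (\<lambda>x. ennreal (gamma_density (lam' i) x))" for i
  have Nprob: "prob_space (N i)" for i unfolding N_def by (rule gd_prob[OF l'pos])
  have sN: "sets (N i) = sets borel" for i unfolding N_def by simp
  have comp: "(\<lambda>x. x i) \<in> borel_measurable (PiM J N)" if "i \<in> J" for i J
    using measurable_component_singleton[OF that, of N] unfolding measurable_cong_sets[OF refl sN] .
  have NB: "f \<in> borel_measurable (N i)" if "f \<in> borel_measurable borel" for f :: "real \<Rightarrow> ennreal" and i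
    using that unfolding measurable_cong_sets[OF sN refl] .
  interpret PS: product_sigma_finite N
    unfolding product_sigma_finite_def using Nprob by (auto intro: prob_space_imp_sigma_finite)
  have rv: "P.random_variable borel (\<eta> i)" if "i \<in> I" for i
    using distributed_measurable[OF dist[OF that]] by simp
  have Deq: "distr M (PiM I (\<lambda>_. borel)) (\<lambda>x. \<lambda>i\<in>I. \<eta> i x) = PiM I (\<lambda>i. distr M borel (\<eta> i))"
    using P.indep_vars_iff_distr_eq_PiM'[OF ne rv] ind by simp
  have Neq: "PiM I (\<lambda>i. distr M borel (\<eta> i)) = PiM I N"
  proof (rule PiM_cong)
    fix i assume i: "i \<in> I"
    have "distr M borel (\<eta> i) = distr M lborel (\<eta> i)" by (rule distr_cong) auto
    also have "\<dots> = N i"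
      using distributed_distr_eq_density[OF dist[OF i]] i by (simp add: N_def lam'_def)
    finally show "distr M borel (\<eta> i) = N i" .
  qed simp
  have meas_map: "(\<lambda>x. \<lambda>i\<in>I. \<eta> i x) \<in> measurable M (PiM I (\<lambda>_. borel))"
    using rv by (intro measurable_restrict) auto
  have KI: "(\<integral>\<^sup>+t. ennreal (p t) * indicator A t \<partial>lborel) = (\<integral>\<^sup>+y. indicator A (\<Prod>i\<in>I. y i) \<partial>PiM I N)"
    if A[measurable]: "A \<in> sets borel" for A
  proof -
    have hm: "(\<lambda>y. indicator A (\<Prod>i\<in>I. y i) :: ennreal) \<in> borel_measurable (PiM I (\<lambda>_. borel))"
      by measurable
    have hm': "(\<lambda>y. indicator A (\<Prod>i\<in>I. y i) :: ennreal) \<in> borel_measurable (distr M (PiM I (\<lambda>_. borel)) (\<lambda>x. \<lambda>i\<in>I. \<eta> i x))"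
      by (subst measurable_cong_sets[OF sets_distr refl]) (rule hm)
    have "(\<integral>\<^sup>+t. ennreal (p t) * indicator A t \<partial>lborel) = (\<integral>\<^sup>+\<omega>. indicator A (\<Prod>i\<in>I. \<eta> i \<omega>) \<partial>M)"
      by (rule distributed_nn_integral[OF dp]) simp
    also have "\<dots> = (\<integral>\<^sup>+\<omega>. indicator A (\<Prod>i\<in>I. (\<lambda>i\<in>I. \<eta> i \<omega>) i) \<partial>M)"
      by (intro nn_integral_cong arg_cong[where f="indicator A"] prod.cong) auto
    also have "\<dots> = (\<integral>\<^sup>+y. indicator A (\<Prod>i\<in>I. y i) \<partial>distr M (PiM I (\<lambda>_. borel)) (\<lambda>x. \<lambda>i\<in>I. \<eta> i x))"
      by (rule nn_integral_distr[symmetric, OF meas_map hm'])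
    finally show ?thesis unfolding Deq Neq .
  qed
  have NI: "(\<integral>\<^sup>+t. f t \<partial>N i) = (\<integral>\<^sup>+t. ennreal (gamma_density (lam i) t) * f t \<partial>lborel)"
    if "i \<in> I" "f \<in> borel_measurable borel" for f i
    using that unfolding N_def lam'_def by (simp add: nn_integral_density)

  have upper: "\<exists>D. \<forall>x>0. p x \<le> D * x powr (s - 1)" if sm: "s < m" for s
  proof -
    define Cs where "Cs = (lam j - s) powr (lam j - s) / Gamma (lam j)"
    define E where "E = (\<Prod>i\<in>I'. Gamma (lam i - s) / Gamma (lam i))"
    define D where "D = Cs * E"
    have Cs0: "0 \<le> Cs" using Gamma_real_pos[OF lpos[OF jI]] by (simp add: Cs_def)
    have fnn: "0 \<le> Gamma (lam i - s) / Gamma (lam i)" if "i \<in> I'" for i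
    proof -
      have iI: "i \<in> I" using that II' by auto
      have "s < lam i" using mle[OF iI] sm by simp
      then show ?thesis using Gamma_real_pos[of "lam i - s"] Gamma_real_pos[OF lpos[OF iI]] by simp
    qed
    have E0: "0 \<le> E" unfolding E_def using fnn by (intro prod_nonneg) auto
    have D0: "0 \<le> D" using Cs0 E0 by (simp add: D_def)
    have sj: "s < lam j" using sm lj by simp
    have "p x \<le> D * x powr (s - 1)" if x: "0 < x" for x
    proof (rule le_from_integrals[OF assms(7) _ pnn _ _ x])
      show "continuous_on {0<..} (\<lambda>x. D * x powr (s - 1))" by (intro continuous_intros) auto
      show "\<And>x. 0 < x \<Longrightarrow> 0 \<le> D * x powr (s - 1)" using D0 by simp
      fix a b :: real assume a: "0 < a" "a < b"
      define A where "A = {a..b}"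
      have Am[measurable]: "A \<in> sets borel" by (simp add: A_def)
      have A0: "A \<subseteq> {0<..}" using a by (auto simp: A_def)
      define J where "J = (\<integral>\<^sup>+u. ennreal (u powr (s - 1)) * indicator A u \<partial>lborel)"
      have "(\<integral>\<^sup>+t. ennreal (p t) * indicator A t \<partial>lborel) = (\<integral>\<^sup>+y. indicator A (\<Prod>i\<in>I. y i) \<partial>PiM I N)"
        by (rule KI[OF Am])
      also have "\<dots> = (\<integral>\<^sup>+x. (\<integral>\<^sup>+t. indicator A (\<Prod>i\<in>insert j I'. (x(j := t)) i) \<partial>N j) \<partial>PiM I' N)"
        unfolding II' by (rule PS.product_nn_integral_insert[OF finI' jI']) (measurable, (rule comp, auto))
      also have "\<dots> = (\<integral>\<^sup>+x. (\<integral>\<^sup>+t. ennreal (gamma_density (lam j) t) * indicator A (t * (\<Prod>i\<in>I'. x i)) \<partial>lborel) \<partial>PiM I' N)"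
      proof (intro nn_integral_cong)
        fix x :: "nat \<Rightarrow> real"
        have pe: "(\<Prod>i\<in>insert j I'. (x(j := t)) i) = t * (\<Prod>i\<in>I'. x i)" for t
        proof -
          have "(\<Prod>i\<in>I'. (x(j := t)) i) = (\<Prod>i\<in>I'. x i)" using jI' by (intro prod.cong) auto
          then show ?thesis using finI' jI' by simp
        qed
        show "(\<integral>\<^sup>+t. indicator A (\<Prod>i\<in>insert j I'. (x(j := t)) i) \<partial>N j)
           = (\<integral>\<^sup>+t. ennreal (gamma_density (lam j) t) * indicator A (t * (\<Prod>i\<in>I'. x i)) \<partial>lborel)"
          unfolding pe by (rule NI[OF jI]) measurable
      qed
      also have "\<dots> \<le> (\<integral>\<^sup>+x. ennreal Cs * J * (\<Prod>i\<in>I'. ennreal (\<bar>x i\<bar> powr (- s))) \<partial>PiM I' N)"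
      proof (intro nn_integral_mono)
        fix x :: "nat \<Rightarrow> real"
        have "(\<Prod>i\<in>I'. ennreal (\<bar>x i\<bar> powr (- s))) = ennreal (\<Prod>i\<in>I'. \<bar>x i\<bar> powr (- s))"
          by (rule prod_ennreal) simp
        also have "(\<Prod>i\<in>I'. \<bar>x i\<bar> powr (- s)) = \<bar>\<Prod>i\<in>I'. x i\<bar> powr (- s)"
          by (simp add: prod_powr_distrib abs_prod)
        finally have e: "(\<Prod>i\<in>I'. ennreal (\<bar>x i\<bar> powr (- s))) = ennreal (\<bar>\<Prod>i\<in>I'. x i\<bar> powr (- s))" .
        show "(\<integral>\<^sup>+t. ennreal (gamma_density (lam j) t) * indicator A (t * (\<Prod>i\<in>I'. x i)) \<partial>lborel)
            \<le> ennreal Cs * J * (\<Prod>i\<in>I'. ennreal (\<bar>x i\<bar> powr (- s)))"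
          unfolding e J_def Cs_def using IL[OF lpos[OF jI] sj A0 Am, of "\<Prod>i\<in>I'. x i"]
          by (simp add: mult_ac)
      qed
      also have "\<dots> = ennreal Cs * J * (\<integral>\<^sup>+x. (\<Prod>i\<in>I'. ennreal (\<bar>x i\<bar> powr (- s))) \<partial>PiM I' N)"
      proof (rule nn_integral_cmult)
        show "(\<lambda>x. \<Prod>i\<in>I'. ennreal (\<bar>x i\<bar> powr (- s))) \<in> borel_measurable (PiM I' N)"
        proof (intro borel_measurable_prod_ennreal)
          fix i assume "i \<in> I'"
          from comp[OF this] show "(\<lambda>x. ennreal (\<bar>x i\<bar> powr (- s))) \<in> borel_measurable (PiM I' N)"
            by measurable
        qed
      qed
      also have "(\<integral>\<^sup>+x. (\<Prod>i\<in>I'. ennreal (\<bar>x i\<bar> powr (- s))) \<partial>PiM I' N)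
          = (\<Prod>i\<in>I'. (\<integral>\<^sup>+y. ennreal (\<bar>y\<bar> powr (- s)) \<partial>N i))"
        by (rule PS.product_nn_integral_prod[OF finI']) (intro NB, measurable)
      also have "\<dots> = (\<Prod>i\<in>I'. ennreal (Gamma (lam i - s) / Gamma (lam i)))"
      proof (rule prod.cong[OF refl])
        fix i assume i: "i \<in> I'"
        then have iI: "i \<in> I" using II' by auto
        have "s < lam i" using mle[OF iI] sm by simp
        then show "(\<integral>\<^sup>+y. ennreal (\<bar>y\<bar> powr (- s)) \<partial>N i) = ennreal (Gamma (lam i - s) / Gamma (lam i))"
          using NI[OF iI, of "\<lambda>y. ennreal (\<bar>y\<bar> powr (- s))"] gd_moment[OF lpos[OF iI]] by simp
      qed
      also have "\<dots> = ennreal E"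
        unfolding E_def using fnn by (intro prod_ennreal) auto
      also have "ennreal Cs * J * ennreal E = J * ennreal D"
        using Cs0 E0 by (simp add: D_def ennreal_mult mult_ac)
      also have "J * ennreal D = (\<integral>\<^sup>+u. ennreal (D * u powr (s - 1)) * indicator A u \<partial>lborel)"
      proof -
        have "(\<integral>\<^sup>+u. ennreal (D * u powr (s - 1)) * indicator A u \<partial>lborel)
            = (\<integral>\<^sup>+u. ennreal D * (ennreal (u powr (s - 1)) * indicator A u) \<partial>lborel)"
          using D0 by (intro nn_integral_cong) (simp add: ennreal_mult mult_ac)
        also have "\<dots> = ennreal D * J" unfolding J_def by (rule nn_integral_cmult) measurable
        finally show ?thesis by (simp add: mult_ac)
      qed
      finally show "(\<integral>\<^sup>+t. ennreal (p t) * indicator {a..b} t \<partial>lborel)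
          \<le> (\<integral>\<^sup>+u. ennreal (D * u powr (s - 1)) * indicator {a..b} u \<partial>lborel)"
        unfolding A_def .
    qed
    then show ?thesis by blast
  qed

  have lower: "\<exists>c>0. \<exists>\<delta>>0. \<forall>x. 0 < x \<longrightarrow> x < \<delta> \<longrightarrow>
       ennreal (c * x powr m) \<le> (\<integral>\<^sup>+t. ennreal (p t) * indicator {0<..x} t \<partial>lborel)"
  proof -
    define c0 where "c0 i = exp (-1) / Gamma (lam i) / lam i" for i
    have c0pos: "0 < c0 i" if "i \<in> I" for i
      using lpos[OF that] Gamma_real_pos[OF lpos[OF that]] by (simp add: c0_def)
    define c where "c = (\<Prod>i\<in>I. c0 i)"
    have cpos: "0 < c" unfolding c_def using c0pos by (intro prod_pos) auto
    have "ennreal (c * x powr m) \<le> (\<integral>\<^sup>+t. ennreal (p t) * indicator {0<..x} t \<partial>lborel)"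
      if x: "0 < x" "x < 1" for x
    proof -
      define B where "B i = (if i = j then {0<..x} else {0<..1::real})" for i
      have "ennreal (c * x powr m) = ennreal (c0 j * x powr m) * (\<Prod>i\<in>I'. ennreal (c0 i))"
        unfolding c_def II' using finI' jI' c0pos II' x
        by (simp add: prod_ennreal ennreal_mult'' [symmetric] prod_nonneg less_imp_le)
      also have "\<dots> \<le> (\<integral>\<^sup>+t. ennreal (gamma_density (lam j) t) * indicator {0<..x} t \<partial>lborel)
             * (\<Prod>i\<in>I'. (\<integral>\<^sup>+t. ennreal (gamma_density (lam i) t) * indicator {0<..1} t \<partial>lborel))"
      proof (intro mult_mono prod_mono_ennreal)
        show "ennreal (c0 j * x powr m) \<le> (\<integral>\<^sup>+t. ennreal (gamma_density (lam j) t) * indicator {0<..x} t \<partial>lborel)"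
          using gd_lower[OF lpos[OF jI], of x] x lj by (simp add: c0_def mult_ac)
        fix i assume "i \<in> I'"
        then have iI: "i \<in> I" using II' by auto
        show "ennreal (c0 i) \<le> (\<integral>\<^sup>+t. ennreal (gamma_density (lam i) t) * indicator {0<..1} t \<partial>lborel)"
          using gd_lower[OF lpos[OF iI], of 1] by (simp add: c0_def)
      qed auto
      also have "\<dots> = (\<Prod>i\<in>insert j I'. (\<integral>\<^sup>+t. indicator (B i) t \<partial>N i))"
      proof -
        have h: "(\<integral>\<^sup>+t. indicator (B i) t \<partial>N i) = (\<integral>\<^sup>+t. ennreal (gamma_density (lam i) t) * indicator (B i) t \<partial>lborel)"
          if "i \<in> I" for i using NI[OF that, of "indicator (B i)"] by (simp add: B_def)
        have "(\<Prod>i\<in>insert j I'. (\<integral>\<^sup>+t. indicator (B i) t \<partial>N i))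
            = (\<integral>\<^sup>+t. indicator (B j) t \<partial>N j) * (\<Prod>i\<in>I'. (\<integral>\<^sup>+t. indicator (B i) t \<partial>N i))"
          using finI' jI' by simp
        also have "(\<integral>\<^sup>+t. indicator (B j) t \<partial>N j) = (\<integral>\<^sup>+t. ennreal (gamma_density (lam j) t) * indicator {0<..x} t \<partial>lborel)"
          using h[OF jI] by (simp add: B_def)
        also have "(\<Prod>i\<in>I'. (\<integral>\<^sup>+t. indicator (B i) t \<partial>N i))
            = (\<Prod>i\<in>I'. (\<integral>\<^sup>+t. ennreal (gamma_density (lam i) t) * indicator {0<..1} t \<partial>lborel))"
        proof (rule prod.cong[OF refl])
          fix i assume i: "i \<in> I'"
          then have "i \<in> I" "i \<noteq> j" using II' jI' by auto
          then show "(\<integral>\<^sup>+t. indicator (B i) t \<partial>N i) = (\<integral>\<^sup>+t. ennreal (gamma_density (lam i) t) * indicator {0<..1} t \<partial>lborel)"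
            using h[of i] by (simp add: B_def)
        qed
        finally show ?thesis by simp
      qed
      also have "\<dots> = (\<integral>\<^sup>+y. (\<Prod>i\<in>insert j I'. indicator (B i) (y i)) \<partial>PiM (insert j I') N)"
        by (rule PS.product_nn_integral_prod[symmetric]) (use finI' in \<open>auto intro!: NB simp: B_def\<close>)
      also have "\<dots> \<le> (\<integral>\<^sup>+y. indicator {0<..x} (\<Prod>i\<in>insert j I'. y i) \<partial>PiM (insert j I') N)"
        by (intro nn_integral_mono) (unfold B_def, rule prod_ind_le[OF finI' jI' x(1)])
      also have "\<dots> = (\<integral>\<^sup>+t. ennreal (p t) * indicator {0<..x} t \<partial>lborel)"
        using KI[of "{0<..x}"] II' by simp
      finally show ?thesis .
    qed
    then show ?thesis using cpos zero_less_one by blast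
  qed
  have parti: "sparsity_shape p = m"
    by (rule sparsity_char[OF mpos pnn upper lower])
  show ?thesis using parti partii by (simp add: m_def L_def I_def)
qed


end
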